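(* The set $H:=\{x\in 3^\omega:\exists^\infty n\,(x(n)=2)\}$ is $\mathbb{T}$-comeager; consequently a set $X\subseteq 3^\omega$ is $\mathbb{T}$-measurable iff $X\cap H$ is $\mathbb{T}$-measurable.
   Context: $\mathbb{T}$ is the tree-forcing (ordered by inclusion) consisting of perfect trees $p\subseteq 3^{<\omega}$ together with a set $A_p\subseteq\omega$ (the splitting levels of $p$) such that: for every $t\in p$, $|t|\in A_p$ iff $t$ is a splitting node of $p$; every splitting node $t$ is fully splitting (i.e. $t^\frown i\in p$ for every $i\in 3$); for every $s\supseteq \mathrm{stem}(p)$ which is not splitting, $s^\frown 2\notin p$; and for all non-splitting $s,t\in p$ with $|s|=|t|$ and all $i\in 2$, $s^\frown i\in p\Leftrightarrow t^\frown i\in p$. Here $s^\frown i$ denotes $s$ extended by the value $i$. $X$ is $\mathbb{T}$-nowhere dense if every $p$ has $q\leq p$ with $[q]\cap X=\emptyset$; $\mathbb{T}$-meager means a countable union of such sets; $X$ is $\mathbb{T}$-measurable if every $p$ has $q\leq p$ with $[q]\cap X$ or $[q]\setminus X$ $\mathbb{T}$-meager. *)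

theory Defs
  imports Main "HOL-Library.Sublist"
begin

text \<open>Finite sequences in 3^{<omega} are nat lists with entries < 3;
  elements of 3^omega are functions nat => nat with values < 3.\<close>

definition Cantor3 :: "(nat \<Rightarrow> nat) set" where
  "Cantor3 = {x. \<forall>n. x n < 3}"

definition is_tree3 :: "nat list set \<Rightarrow> bool" where
  "is_tree3 p \<longleftrightarrow> p \<noteq> {} \<and> (\<forall>t\<in>p. \<forall>i\<in>set t. i < 3)
     \<and> (\<forall>t\<in>p. \<forall>s. prefix s t \<longrightarrow> s \<in> p)"

definition splitting :: "nat list set \<Rightarrow> nat list \<Rightarrow> bool" where
  "splitting p t \<longleftrightarrow> t \<in> p \<and> (\<exists>i j. i \<noteq> j \<and> t @ [i] \<in> p \<and> t @ [j] \<in> p)"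

definition perfect3 :: "nat list set \<Rightarrow> bool" where
  "perfect3 p \<longleftrightarrow> (\<forall>t\<in>p. \<exists>s\<in>p. prefix t s \<and> splitting p s)"

definition stem :: "nat list set \<Rightarrow> nat list" where
  "stem p = (THE t. t \<in> p \<and> splitting p t \<and> (\<forall>s\<in>p. prefix s t \<or> prefix t s))"

definition T_cond :: "nat list set \<Rightarrow> nat set \<Rightarrow> bool" where
  "T_cond p A \<longleftrightarrow> is_tree3 p \<and> perfect3 p
     \<and> (\<forall>t\<in>p. length t \<in> A \<longleftrightarrow> splitting p t)
     \<and> (\<forall>t\<in>p. splitting p t \<longrightarrow> (\<forall>i<3. t @ [i] \<in> p))
     \<and> (\<forall>s\<in>p. prefix (stem p) s \<and> \<not> splitting p s \<longrightarrow> s @ [2] \<notin> p)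
     \<and> (\<forall>s\<in>p. \<forall>t\<in>p. \<not> splitting p s \<and> \<not> splitting p t \<and> length s = length t
          \<longrightarrow> (\<forall>i<2. s @ [i] \<in> p \<longleftrightarrow> t @ [i] \<in> p))"

definition body :: "nat list set \<Rightarrow> (nat \<Rightarrow> nat) set" where
  "body p = {x \<in> Cantor3. \<forall>n. map x [0..<n] \<in> p}"

definition T_nowhere_dense :: "(nat \<Rightarrow> nat) set \<Rightarrow> bool" where
  "T_nowhere_dense X \<longleftrightarrow> (\<forall>p A. T_cond p A \<longrightarrow>
     (\<exists>q B. T_cond q B \<and> q \<subseteq> p \<and> body q \<inter> X = {}))"

definition T_meager :: "(nat \<Rightarrow> nat) set \<Rightarrow> bool" where
  "T_meager X \<longleftrightarrow> (\<exists>N :: nat \<Rightarrow> (nat \<Rightarrow> nat) set.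
     (\<forall>n. T_nowhere_dense (N n)) \<and> X = (\<Union>n. N n))"

definition T_comeager :: "(nat \<Rightarrow> nat) set \<Rightarrow> bool" where
  "T_comeager X \<longleftrightarrow> T_meager (Cantor3 - X)"

definition T_measurable :: "(nat \<Rightarrow> nat) set \<Rightarrow> bool" where
  "T_measurable X \<longleftrightarrow> (\<forall>p A. T_cond p A \<longrightarrow>
     (\<exists>q B. T_cond q B \<and> q \<subseteq> p \<and>
        (T_meager (body q \<inter> X) \<or> T_meager (body q - X))))"

end

theory Submission
  imports Defs "HOL-Library.Infinite_Set"
begin

lemma pref_eq_len: "prefix a c \<Longrightarrow> prefix b c \<Longrightarrow> length a = length b \<Longrightarrow> a = b"
  unfolding prefix_def by (auto simp: append_eq_append_conv)

lemma split_not_strict: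
  assumes "splitting p t" and "\<forall>s\<in>p. prefix s w \<or> prefix w s"
  shows "\<not> strict_prefix t w"
proof
  assume st: "strict_prefix t w"
  obtain i j where ij: "i \<noteq> j" "t @ [i] \<in> p" "t @ [j] \<in> p" using assms(1) unfolding splitting_def by blast
  have lt: "length t < length w" using st prefix_length_less by blast
  have "prefix (t@[i]) w"
  proof -
    have "prefix (t@[i]) w \<or> prefix w (t@[i])" using assms(2) ij by blast
    moreover have "prefix w (t@[i]) \<Longrightarrow> w = t@[i]"
      using lt pref_eq_len[of w "t@[i]" "t@[i]"] prefix_length_le[of w "t@[i]"] by simp
    ultimately show ?thesis by auto
  qed
  moreover have "prefix (t@[j]) w"
  proof -
    have "prefix (t@[j]) w \<or> prefix w (t@[j])" using assms(2) ij by blast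
    moreover have "prefix w (t@[j]) \<Longrightarrow> w = t@[j]"
      using lt pref_eq_len[of w "t@[j]" "t@[j]"] prefix_length_le[of w "t@[j]"] by simp
    ultimately show ?thesis by auto
  qed
  ultimately have "t@[i] = t@[j]" using pref_eq_len by fastforce
  then show False using ij by simp
qed

lemma tree_nil: "is_tree3 p \<Longrightarrow> [] \<in> p"
  unfolding is_tree3_def by auto

lemma stem_exists:
  assumes T: "is_tree3 p" and P: "perfect3 p"
  shows "\<exists>t\<in>p. splitting p t \<and> (\<forall>s\<in>p. prefix s t \<or> prefix t s)"
proof -
  have ex: "\<exists>m. \<exists>s\<in>p. splitting p s \<and> length s = m"
    using P tree_nil[OF T] unfolding perfect3_def by blast
  define k where "k = (LEAST m. \<exists>s\<in>p. splitting p s \<and> length s = m)"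
  obtain s0 where s0: "s0 \<in> p" "splitting p s0" "length s0 = k"
    using LeastI_ex[OF ex] unfolding k_def by blast
  have mink: "\<And>s. s \<in> p \<Longrightarrow> length s < k \<Longrightarrow> \<not> splitting p s"
    unfolding k_def using not_less_Least by blast
  have closed: "\<And>s v. v \<in> p \<Longrightarrow> prefix s v \<Longrightarrow> s \<in> p" using T unfolding is_tree3_def by blast
  have uniq: "\<forall>v w. v \<in> p \<longrightarrow> w \<in> p \<longrightarrow> length v = m \<longrightarrow> length w = m \<longrightarrow> v = w" if "m \<le> k" for m
    using that
  proof (induction m)
    case 0 then show ?case by auto
  next
    case (Suc m)
    show ?case
    proof (intro allI impI)
      fix v w assume v: "v \<in> p" and w: "w \<in> p" and lv: "length v = Suc m" and lw: "length w = Suc m"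
      obtain z a where za: "v = z @ [a]" using lv by (metis length_Suc_conv_rev)
      obtain z' b where zb: "w = z' @ [b]" using lw by (metis length_Suc_conv_rev)
      have "z \<in> p" using closed v za by auto
      moreover have "z' \<in> p" using closed w zb by auto
      ultimately have "z = z'" using Suc za zb lv lw by auto
      moreover have "\<not> splitting p z" using mink \<open>z \<in> p\<close> za lv Suc.prems by auto
      ultimately have "a = b" using v w za zb \<open>z \<in> p\<close> unfolding splitting_def by blast
      then show "v = w" using za zb \<open>z = z'\<close> by simp
    qed
  qed
  have "\<forall>s\<in>p. prefix s s0 \<or> prefix s0 s"
  proof
    fix s assume s: "s \<in> p"
    show "prefix s s0 \<or> prefix s0 s"
    proof (cases "length s \<le> k")
      case True
      have "take (length s) s0 \<in> p" using closed s0(1) take_is_prefix by blast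
      then have "take (length s) s0 = s" using uniq[OF True] s True s0(3) by auto
      then show ?thesis by (metis take_is_prefix)
    next
      case False
      have "take k s \<in> p" using closed s take_is_prefix by blast
      then have "take k s = s0" using uniq[of k] s0 False by auto
      then show ?thesis by (metis take_is_prefix)
    qed
  qed
  then show ?thesis using s0 by blast
qed

lemma stem_eq:
  assumes "u \<in> p" "splitting p u" "\<forall>s\<in>p. prefix s u \<or> prefix u s"
  shows "stem p = u"
  unfolding stem_def
proof (rule the_equality)
  show "u \<in> p \<and> splitting p u \<and> (\<forall>s\<in>p. prefix s u \<or> prefix u s)" using assms by blast
next
  fix t assume t: "t \<in> p \<and> splitting p t \<and> (\<forall>s\<in>p. prefix s t \<or> prefix t s)"
  have "\<not> strict_prefix t u" using split_not_strict t assms by blast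
  moreover have "\<not> strict_prefix u t" using split_not_strict t assms by blast
  moreover have "prefix t u \<or> prefix u t" using t assms by blast
  ultimately show "t = u" by (auto simp: strict_prefix_def)
qed

lemma stem_below:
  assumes T: "is_tree3 p" and P: "perfect3 p" and u: "u \<in> p" "splitting p u"
  shows "prefix (stem p) u"
proof -
  obtain t where t: "t\<in>p" "splitting p t" "\<forall>s\<in>p. prefix s t \<or> prefix t s"
    using stem_exists[OF T P] by blast
  have "stem p = t" using stem_eq t by blast
  moreover have "\<not> strict_prefix u t" using split_not_strict u t by blast
  moreover have "prefix u t \<or> prefix t u" using t u by blast
  ultimately show ?thesis by (auto simp: strict_prefix_def)
qed


lemma restrict:
  assumes TC: "T_cond p A" and u: "u \<in> p" "splitting p u"
  shows "T_cond {v\<in>p. prefix v u \<or> prefix u v} {k\<in>A. k \<ge> length u}"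
proof -
  define q where "q = {v\<in>p. prefix v u \<or> prefix u v}"
  have T: "is_tree3 p" and P: "perfect3 p" using TC unfolding T_cond_def by auto
  have levp: "\<forall>t\<in>p. length t \<in> A \<longleftrightarrow> splitting p t" using TC unfolding T_cond_def by blast
  have fullp: "\<forall>t\<in>p. splitting p t \<longrightarrow> (\<forall>i<3. t @ [i] \<in> p)" using TC unfolding T_cond_def by blast
  have st2p: "\<forall>s\<in>p. prefix (stem p) s \<and> \<not> splitting p s \<longrightarrow> s @ [2] \<notin> p" using TC unfolding T_cond_def by blast
  have closed: "\<And>s v. v \<in> p \<Longrightarrow> prefix s v \<Longrightarrow> s \<in> p" using T unfolding is_tree3_def by blast
  have qp: "q \<subseteq> p" unfolding q_def by auto
  have ch: "\<And>v i. prefix u v \<Longrightarrow> (v@[i] \<in> q \<longleftrightarrow> v@[i] \<in> p)"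
    unfolding q_def by auto
  have sq: "\<And>v. prefix u v \<Longrightarrow> v \<in> p \<Longrightarrow> splitting q v \<longleftrightarrow> splitting p v"
  proof -
    fix v assume a: "prefix u v" "v \<in> p"
    then have "v \<in> q" unfolding q_def by auto
    then show "splitting q v \<longleftrightarrow> splitting p v" using a ch qp unfolding splitting_def by blast
  qed
  have short: "\<And>v. v \<in> q \<Longrightarrow> length v < length u \<Longrightarrow> prefix v u \<and> \<not> splitting q v"
  proof -
    fix v assume v: "v \<in> q" "length v < length u"
    have pv: "prefix v u" using v unfolding q_def using prefix_length_le by fastforce
    have c: "prefix (v@[i]) u" if "v@[i] \<in> q" for i
    proof -
      have "prefix (v@[i]) u \<or> prefix u (v@[i])" using that unfolding q_def by auto
      moreover have "prefix u (v@[i]) \<Longrightarrow> u = v@[i]"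
        using v(2) pref_eq_len[of u "v@[i]" "v@[i]"] prefix_length_le[of u "v@[i]"] by simp
      ultimately show ?thesis by auto
    qed
    have "\<not> splitting q v"
    proof
      assume "splitting q v"
      then obtain i j where "i \<noteq> j" "v@[i] \<in> q" "v@[j] \<in> q" unfolding splitting_def by blast
      then show False using c pref_eq_len[of "v@[i]" u "v@[j]"] by auto
    qed
    then show "prefix v u \<and> \<not> splitting q v" using pv by blast
  qed
  have long: "\<And>v. v \<in> q \<Longrightarrow> length v \<ge> length u \<Longrightarrow> prefix u v"
  proof -
    fix v assume v: "v \<in> q" "length v \<ge> length u"
    then have "prefix v u \<or> prefix u v" unfolding q_def by auto
    moreover have "prefix v u \<Longrightarrow> v = u"
      using v(2) prefix_length_le[of v u] pref_eq_len[of v u u] by simp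
    ultimately show "prefix u v" by auto
  qed
  have uq: "u \<in> q" using u unfolding q_def by auto
  have suq: "splitting q u" using sq u by auto
  have treeq: "is_tree3 q"
    unfolding is_tree3_def
  proof (intro conjI ballI allI impI)
    show "q \<noteq> {}" using uq by auto
  next
    fix t i assume "t \<in> q" "i \<in> set t" then show "i < 3" using T qp unfolding is_tree3_def by blast
  next
    fix t s assume t: "t \<in> q" "prefix s t"
    then have "s \<in> p" using closed qp by blast
    moreover have "prefix s u \<or> prefix u s"
      using t unfolding q_def using prefix_same_cases prefix_order.trans by blast
    ultimately show "s \<in> q" unfolding q_def by auto
  qed
  have perfq: "perfect3 q"
    unfolding perfect3_def
  proof
    fix v assume v: "v \<in> q"
    show "\<exists>s\<in>q. prefix v s \<and> splitting q s"
    proof (cases "prefix u v")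
      case True
      obtain s where s: "s \<in> p" "prefix v s" "splitting p s" using P v qp unfolding perfect3_def by blast
      have us: "prefix u s" using True s by auto
      then have "s \<in> q" using s unfolding q_def by auto
      then show ?thesis using s sq us by blast
    next
      case False
      then have "prefix v u" using v unfolding q_def by auto
      then show ?thesis using uq suq by blast
    qed
  qed
  have stemq: "stem q = u"
    by (rule stem_eq[OF uq suq]) (auto simp: q_def)
  have stemp: "prefix (stem p) u" using stem_below[OF T P u] .
  have "T_cond q {k\<in>A. k \<ge> length u}"
    unfolding T_cond_def
  proof (intro conjI treeq perfq ballI impI allI)
    fix t assume t: "t \<in> q"
    show "length t \<in> {k \<in> A. length u \<le> k} \<longleftrightarrow> splitting q t"
    proof (cases "length t \<ge> length u")
      case True
      then have "prefix u t" using long t by auto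
      moreover have "t \<in> p" using t qp by auto
      ultimately show ?thesis using True sq levp by auto
    next
      case False
      then show ?thesis using short t by auto
    qed
  next
    fix t i assume t: "t \<in> q" "splitting q t" "i < (3::nat)"
    then have "length t \<ge> length u" using short by fastforce
    then have "prefix u t" using long t by auto
    moreover have "t \<in> p" using t qp by auto
    ultimately have "splitting p t" using sq t by blast
    then have "t @ [i] \<in> p" using fullp \<open>t \<in> p\<close> t(3) by blast
    then show "t @ [i] \<in> q" using ch \<open>prefix u t\<close> by blast
  next
    fix s assume s: "s \<in> q" "prefix (stem q) s \<and> \<not> splitting q s"
    then have us: "prefix u s" using stemq by auto
    then have "\<not> splitting p s" using s sq qp by blast
    moreover have "prefix (stem p) s" using stemp us by auto
    moreover have "s \<in> p" using s qp by auto
    ultimately have "s @ [2] \<notin> p" using st2p by blast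
    then show "s @ [2] \<notin> q" using qp by blast
  next
    fix s t i assume st: "s \<in> q" "t \<in> q" "\<not> splitting q s \<and> \<not> splitting q t \<and> length s = length t"
      and i: "i < (2::nat)"
    show "s @ [i] \<in> q \<longleftrightarrow> t @ [i] \<in> q"
    proof (cases "length s \<ge> length u")
      case True
      then have "prefix u s" "prefix u t" using long st by auto
      moreover have "s \<in> p" "t \<in> p" using st qp by auto
      ultimately have np: "\<not> splitting p s" "\<not> splitting p t" using sq st by auto
      have lv: "\<forall>s\<in>p. \<forall>t\<in>p. \<not> splitting p s \<and> \<not> splitting p t \<and> length s = length t
          \<longrightarrow> (\<forall>i<2. s @ [i] \<in> p \<longleftrightarrow> t @ [i] \<in> p)" using TC unfolding T_cond_def by blast
      have "s @ [i] \<in> p \<longleftrightarrow> t @ [i] \<in> p" using lv \<open>s \<in> p\<close> \<open>t \<in> p\<close> np st i by blast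
      then show ?thesis using ch \<open>prefix u s\<close> \<open>prefix u t\<close> by blast
    next
      case False
      then have "prefix s u" "prefix t u" using short st by auto
      then have "s = t" using st pref_eq_len by blast
      then show ?thesis by simp
    qed
  qed
  then show ?thesis unfolding q_def .
qed


lemma long_nodes:
  assumes T: "is_tree3 p" and P: "perfect3 p"
  shows "\<exists>v\<in>p. length v \<ge> n"
proof (induction n)
  case 0 then show ?case using tree_nil[OF T] by auto
next
  case (Suc n)
  then obtain v where v: "v \<in> p" "length v \<ge> n" by blast
  then obtain s where s: "s \<in> p" "prefix v s" "splitting p s" using P unfolding perfect3_def by blast
  then obtain i where "s @ [i] \<in> p" unfolding splitting_def by blast
  moreover have "length (s @ [i]) \<ge> Suc n" using s v prefix_length_le by fastforce
  ultimately show ?case by blast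
qed

lemma nd: "T_nowhere_dense {x\<in>Cantor3. \<forall>m\<ge>n. x m \<noteq> 2}"
  unfolding T_nowhere_dense_def
proof (intro allI impI)
  fix p A assume TC: "T_cond p A"
  have T: "is_tree3 p" and P: "perfect3 p" using TC unfolding T_cond_def by auto
  obtain v where v: "v \<in> p" "length v \<ge> n" using long_nodes[OF T P] by blast
  then obtain s where s: "s \<in> p" "prefix v s" "splitting p s" using P unfolding perfect3_def by blast
  have sn: "length s \<ge> n" using s v prefix_length_le by fastforce
  have fullp: "\<forall>t\<in>p. splitting p t \<longrightarrow> (\<forall>i<3. t @ [i] \<in> p)" using TC unfolding T_cond_def by blast
  have s2: "s @ [2] \<in> p" using fullp s by auto
  then obtain u where u: "u \<in> p" "prefix (s@[2]) u" "splitting p u" using P unfolding perfect3_def by blast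
  define q where "q = {v\<in>p. prefix v u \<or> prefix u v}"
  have "T_cond q {k\<in>A. k \<ge> length u}" unfolding q_def using restrict[OF TC u(1) u(3)] .
  moreover have "q \<subseteq> p" unfolding q_def by auto
  moreover have "body q \<inter> {x\<in>Cantor3. \<forall>m\<ge>n. x m \<noteq> 2} = {}"
  proof (rule ccontr)
    assume "body q \<inter> {x\<in>Cantor3. \<forall>m\<ge>n. x m \<noteq> 2} \<noteq> {}"
    then obtain x where x: "x \<in> body q" "\<forall>m\<ge>n. x m \<noteq> 2" by blast
    have "map x [0..<length u] \<in> q" using x unfolding body_def by blast
    then have "prefix (map x [0..<length u]) u \<or> prefix u (map x [0..<length u])" unfolding q_def by blast
    moreover have "length (map x [0..<length u]) = length u" by simp
    ultimately have eq: "map x [0..<length u] = u"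
      using pref_eq_len[of "map x [0..<length u]" u u] pref_eq_len[of u "map x [0..<length u]" "map x [0..<length u]"] by auto
    obtain zs where zs: "u = s @ [2] @ zs" using u(2) unfolding prefix_def by auto
    have lt: "length s < length u" using zs by simp
    have "x (length s) = map x [0..<length u] ! length s" using lt by simp
    also have "\<dots> = 2" using eq zs by simp
    finally show False using x sn by blast
  qed
  ultimately show "\<exists>q B. T_cond q B \<and> q \<subseteq> p \<and> body q \<inter> {x\<in>Cantor3. \<forall>m\<ge>n. x m \<noteq> 2} = {}" by blast
qed

lemma meager_sub:
  assumes "T_meager M1" "T_meager M2" "Y \<subseteq> M1 \<union> M2"
  shows "T_meager Y"
proof -
  obtain N1 :: "nat \<Rightarrow> (nat \<Rightarrow> nat) set" where N1c: "(\<forall>n. T_nowhere_dense (N1 n)) \<and> M1 = (\<Union>n. N1 n)" using assms(1) unfolding T_meager_def by metis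
  note N1 = conjunct1[OF N1c] conjunct2[OF N1c]
  obtain N2 :: "nat \<Rightarrow> (nat \<Rightarrow> nat) set" where N2c: "(\<forall>n. T_nowhere_dense (N2 n)) \<and> M2 = (\<Union>n. N2 n)" using assms(2) unfolding T_meager_def by metis
  note N2 = conjunct1[OF N2c] conjunct2[OF N2c]
  define N where "N (k::nat) = (if even k then N1 (k div 2) else N2 (k div 2)) \<inter> Y" for k
  have sub: "T_nowhere_dense Z" if ndW: "T_nowhere_dense W" and ZW: "Z \<subseteq> W" for Z W
    unfolding T_nowhere_dense_def
  proof (intro allI impI)
    fix p A assume "T_cond p A"
    then obtain q B where qB: "T_cond q B" "q \<subseteq> p" "body q \<inter> W = {}"
      using ndW unfolding T_nowhere_dense_def by blast
    have "body q \<inter> Z = {}" using qB(3) ZW by blast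
    then show "\<exists>q B. T_cond q B \<and> q \<subseteq> p \<and> body q \<inter> Z = {}" using qB by blast
  qed
  have "\<forall>k. T_nowhere_dense (N k)"
  proof
    fix k
    show "T_nowhere_dense (N k)"
    proof (cases "even k")
      case True
      then have "N k = N1 (k div 2) \<inter> Y" unfolding N_def by simp
      then show ?thesis using sub[of "N1 (k div 2)" "N k"] N1(1) by blast
    next
      case False
      then have "N k = N2 (k div 2) \<inter> Y" unfolding N_def by simp
      then show ?thesis using sub[of "N2 (k div 2)" "N k"] N2(1) by blast
    qed
  qed
  moreover have "Y = (\<Union>k. N k)"
  proof
    show "(\<Union>k. N k) \<subseteq> Y" unfolding N_def by auto
  next
    show "Y \<subseteq> (\<Union>k. N k)"
    proof
      fix y assume y: "y \<in> Y"
      then have "y \<in> M1 \<or> y \<in> M2" using assms(3) by auto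
      then show "y \<in> (\<Union>k. N k)"
      proof
        assume "y \<in> M1"
        then obtain n where "y \<in> N1 n" using N1 by auto
        then have "y \<in> N (2*n)" using y unfolding N_def by auto
        then show ?thesis by blast
      next
        assume "y \<in> M2"
        then obtain n where "y \<in> N2 n" using N2 by auto
        then have "y \<in> N (2*n+1)" using y unfolding N_def by auto
        then show ?thesis by blast
      qed
    qed
  qed
  ultimately show ?thesis unfolding T_meager_def by (intro exI[of _ N] conjI)
qed

theorem mainTheorem9:
  fixes H :: "(nat \<Rightarrow> nat) set"
  defines "H \<equiv> {x \<in> Cantor3. infinite {n. x n = 2}}"
  shows "T_comeager H \<and>
    (\<forall>X. X \<subseteq> Cantor3 \<longrightarrow> (T_measurable X \<longleftrightarrow> T_measurable (X \<inter> H)))"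
proof -
  have eqH: "Cantor3 - H = (\<Union>n. {x\<in>Cantor3. \<forall>m\<ge>n. x m \<noteq> 2})"
  proof
    show "Cantor3 - H \<subseteq> (\<Union>n. {x\<in>Cantor3. \<forall>m\<ge>n. x m \<noteq> 2})"
    proof
      fix x assume x: "x \<in> Cantor3 - H"
      then have fin: "finite {n. x n = 2}" unfolding H_def by auto
      then obtain n where "{n. x n = 2} \<subseteq> {..<n}" using finite_nat_bounded by blast
      then have "\<forall>m\<ge>n. x m \<noteq> 2" by auto
      then show "x \<in> (\<Union>n. {x\<in>Cantor3. \<forall>m\<ge>n. x m \<noteq> 2})" using x by blast
    qed
  next
    show "(\<Union>n. {x\<in>Cantor3. \<forall>m\<ge>n. x m \<noteq> 2}) \<subseteq> Cantor3 - H"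
    proof
      fix x assume "x \<in> (\<Union>n. {x\<in>Cantor3. \<forall>m\<ge>n. x m \<noteq> 2})"
      then obtain n where x: "x \<in> Cantor3" "\<forall>m\<ge>n. x m \<noteq> 2" by blast
      then have "{n. x n = 2} \<subseteq> {..<n}" using not_less by auto
      then have "finite {n. x n = 2}" using finite_subset by blast
      then show "x \<in> Cantor3 - H" using x unfolding H_def by auto
    qed
  qed
  have mH: "T_meager (Cantor3 - H)"
    unfolding T_meager_def
    by (rule exI[of _ "\<lambda>n. {x\<in>Cantor3. \<forall>m\<ge>n. x m \<noteq> 2}"]) (use eqH nd in auto)
  have bC: "body q \<subseteq> Cantor3" for q unfolding body_def by auto
  have "T_measurable X \<longleftrightarrow> T_measurable (X \<inter> H)" for X
  proof
    assume m: "T_measurable X"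
    show "T_measurable (X \<inter> H)"
      unfolding T_measurable_def
    proof (intro allI impI)
      fix p A assume "T_cond p A"
      then obtain q B where qB: "T_cond q B" "q \<subseteq> p" "T_meager (body q \<inter> X) \<or> T_meager (body q - X)"
        using m unfolding T_measurable_def by blast
      have "T_meager (body q \<inter> (X \<inter> H)) \<or> T_meager (body q - X \<inter> H)"
        using qB(3)
      proof
        assume "T_meager (body q \<inter> X)"
        then show ?thesis using meager_sub[of "body q \<inter> X" "body q \<inter> X" "body q \<inter> (X \<inter> H)"] by blast
      next
        assume "T_meager (body q - X)"
        then show ?thesis using meager_sub[of "body q - X" "Cantor3 - H" "body q - X \<inter> H"] mH bC by blast
      qed
      then show "\<exists>q B. T_cond q B \<and> q \<subseteq> p \<and> (T_meager (body q \<inter> (X \<inter> H)) \<or> T_meager (body q - X \<inter> H))"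
        using qB by blast
    qed
  next
    assume m: "T_measurable (X \<inter> H)"
    show "T_measurable X"
      unfolding T_measurable_def
    proof (intro allI impI)
      fix p A assume "T_cond p A"
      then obtain q B where qB: "T_cond q B" "q \<subseteq> p" "T_meager (body q \<inter> (X \<inter> H)) \<or> T_meager (body q - X \<inter> H)"
        using m unfolding T_measurable_def by blast
      have "T_meager (body q \<inter> X) \<or> T_meager (body q - X)"
        using qB(3)
      proof
        assume "T_meager (body q \<inter> (X \<inter> H))"
        then show ?thesis using meager_sub[of "body q \<inter> (X \<inter> H)" "Cantor3 - H" "body q \<inter> X"] mH bC by blast
      next
        assume "T_meager (body q - X \<inter> H)"
        then show ?thesis using meager_sub[of "body q - X \<inter> H" "body q - X \<inter> H" "body q - X"] by blast
      qed
      then show "\<exists>q B. T_cond q B \<and> q \<subseteq> p \<and> (T_meager (body q \<inter> X) \<or> T_meager (body q - X))"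
        using qB by blast
    qed
  qed
  then show ?thesis using mH unfolding T_comeager_def by blast
qed

end
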